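(* Fix parameters $T>0$, $T_f>0$, $f_e>0$, $c_0>0$, $W>0$, a probability density $f$ on $(0,\infty)$, and a number $D_e\ge 0$ with $T-\frac{c_0D_e}{f_e}>0$. Define $$N(D_e)=\left\lceil \frac{Tf_e-c_0D_e}{T_f f_e}\right\rceil,\qquad t_1(D_e)=\Big(T-\frac{c_0D_e}{f_e}\Big)-\Big\lceil \Big(T-\frac{c_0D_e}{f_e}\Big)/T_f\Big\rceil T_f+T_f ,$$ and for $d\ge 0$, $h>0$, $t>0$ let $e(d,h,t,W)=\frac{t\,(e^{d/(tW)}-1)}{h}$. Define recursively, for $d\ge 0$ and $h>0$, $$J_1(d,h)=e(d,h,t_1(D_e),W),\qquad J_n(d)=\int_0^\infty J_n(d,h)f(h)\,dh\ (n\ge 1),$$ $$J_n(d,h)=\min_{0\le x\le d}\Big(e(x,h,T_f,W)+J_{n-1}(d-x)\Big)\quad (n\ge 2).$$ Then for every $n\in\{1,2,\dots,N(D_e)-1\}$, the function $d\mapsto J_n(d)$ is convex on $[0,D_e]$, and for every $h>0$ the function $d\mapsto J_n(d,h)$ is convex on $[0,D_e]$.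
   Context: Model: a mobile device offloads $D_e$ data nats to a base station over block-fading blocks of duration $T_f$, indexed backwards so that offloading starts in block $N(D_e)$ and ends in block $1$; the base station needs time $c_0D_e/f_e$ to compute, so transmission must finish within $T-c_0D_e/f_e$; block $1$ has transmission time $t_1(D_e)\in(0,T_f]$ and all other blocks have transmission time $T_f$. The normalized channel gain $h$ is i.i.d. across blocks with density $f$. $e(d,h,t,W)$ is the energy to send $d$ nats in time $t$ over bandwidth $W$ with normalized gain $h$ (Shannon capacity). $J_n(d)$ is the minimal expected energy to send $d$ nats over blocks $n,\dots,1$ and $J_n(d,h)$ the same conditioned on the gain $h$ in block $n$. The functions $J_n$ take values in $[0,+\infty]$ (the minimum is understood as an infimum), and convexity is meant in the usual sense for extended-real-valued functions. *)

theory Defs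
  imports "HOL-Analysis.Analysis"
begin

definition energy :: "real \<Rightarrow> real \<Rightarrow> real \<Rightarrow> real \<Rightarrow> real" where
  "energy d h t W = t * (exp (d / (t * W)) - 1) / h"

definition Nblocks :: "real \<Rightarrow> real \<Rightarrow> real \<Rightarrow> real \<Rightarrow> real \<Rightarrow> int" where
  "Nblocks T Tf fe c0 De = \<lceil>(T * fe - c0 * De) / (Tf * fe)\<rceil>"

definition t1 :: "real \<Rightarrow> real \<Rightarrow> real \<Rightarrow> real \<Rightarrow> real \<Rightarrow> real" where
  "t1 T Tf fe c0 De =
     (T - c0 * De / fe) - real_of_int \<lceil>(T - c0 * De / fe) / Tf\<rceil> * Tf + Tf"

text \<open>Jc Tf W t1 f n d h = J_n(d,h) (for n \<ge> 1; index 0 unused), values in [0,\<infinity>].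
  The minimum is understood as an infimum.\<close>
fun Jc :: "real \<Rightarrow> real \<Rightarrow> real \<Rightarrow> (real \<Rightarrow> real) \<Rightarrow> nat \<Rightarrow> real \<Rightarrow> real \<Rightarrow> ennreal" where
  "Jc Tf W t f 0 d h = 0"
| "Jc Tf W t f (Suc 0) d h = ennreal (energy d h t W)"
| "Jc Tf W t f (Suc (Suc n)) d h =
     (INF x\<in>{0..d}. ennreal (energy x h Tf W)
        + (\<integral>\<^sup>+ g\<in>{0<..}. Jc Tf W t f (Suc n) (d - x) g * ennreal (f g) \<partial>lborel))"

definition Jexp :: "real \<Rightarrow> real \<Rightarrow> real \<Rightarrow> (real \<Rightarrow> real) \<Rightarrow> nat \<Rightarrow> real \<Rightarrow> ennreal" where
  "Jexp Tf W t f n d = (\<integral>\<^sup>+ g\<in>{0<..}. Jc Tf W t f n d g * ennreal (f g) \<partial>lborel)"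

definition convex_on_ennreal :: "real set \<Rightarrow> (real \<Rightarrow> ennreal) \<Rightarrow> bool" where
  "convex_on_ennreal S g \<longleftrightarrow> convex S \<and>
     (\<forall>x\<in>S. \<forall>y\<in>S. \<forall>u::real. 0 < u \<and> u < 1 \<longrightarrow>
        g (u * x + (1 - u) * y) \<le> ennreal u * g x + ennreal (1 - u) * g y)"

end

theory Submission
  imports Defs
begin

lemma energy_nonneg:
  assumes "x \<ge> 0" "t > 0" "W > 0" "h > 0"
  shows "energy x h t W \<ge> 0"
  using assms by (simp add: energy_def)

lemma energy_antimono:
  assumes "x \<ge> 0" "t > 0" "W > 0" "0 < h1" "h1 \<le> h2"
  shows "energy x h2 t W \<le> energy x h1 t W"
proof -
  have c: "t * (exp (x / (t * W)) - 1) \<ge> 0" using assms by simp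
  show ?thesis unfolding energy_def
    using divide_left_mono[OF assms(5) c] assms by simp
qed

lemma energy_convex:
  assumes "t > 0" "W > 0" "h > 0" "0 < u" "u < 1"
  shows "energy (u * x + (1 - u) * y) h t W \<le> u * energy x h t W + (1 - u) * energy y h t W"
proof -
  have cv: "exp (u * (x / (t*W)) + (1 - u) * (y / (t*W))) \<le> u * exp (x/(t*W)) + (1-u) * exp (y/(t*W))"
    using convex_onD[OF exp_convex, of "1-u" "x/(t*W)" "y/(t*W)"] assms by auto
  have eq: "(u * x + (1 - u) * y) / (t * W) = u * (x / (t*W)) + (1 - u) * (y / (t*W))"
    by (simp add: add_divide_distrib)
  have "t * (exp ((u * x + (1 - u) * y) / (t * W)) - 1) \<le> t * ((u * exp (x/(t*W)) + (1-u) * exp (y/(t*W))) - 1)"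
    using cv eq assms by simp
  also have "\<dots> = u * (t * (exp (x / (t * W)) - 1)) + (1 - u) * (t * (exp (y / (t * W)) - 1))"
    by (simp add: algebra_simps)
  finally have "t * (exp ((u * x + (1 - u) * y) / (t * W)) - 1) / h \<le>
      (u * (t * (exp (x / (t * W)) - 1)) + (1 - u) * (t * (exp (y / (t * W)) - 1))) / h"
    using assms by (simp add: divide_right_mono)
  then show ?thesis unfolding energy_def by (simp add: add_divide_distrib)
qed

lemma ennreal_convex_comb:
  assumes "a \<ge> 0" "b \<ge> 0" "0 < u" "u < 1"
  shows "ennreal (u * a + (1 - u) * b) = ennreal u * ennreal a + ennreal (1 - u) * ennreal b"
  using assms by (simp add: ennreal_plus ennreal_mult)

lemma energy_convex_ennreal:
  assumes "t > 0" "W > 0" "h > 0" "0 < u" "u < 1" "x \<ge> 0" "y \<ge> 0"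
  shows "ennreal (energy (u * x + (1 - u) * y) h t W) \<le>
    ennreal u * ennreal (energy x h t W) + ennreal (1 - u) * ennreal (energy y h t W)"
proof -
  have "ennreal (energy (u * x + (1 - u) * y) h t W) \<le> ennreal (u * energy x h t W + (1 - u) * energy y h t W)"
    using energy_convex[OF assms(1-5)] by (rule ennreal_leI)
  also have "\<dots> = ennreal u * ennreal (energy x h t W) + ennreal (1 - u) * ennreal (energy y h t W)"
    using assms by (intro ennreal_convex_comb energy_nonneg) auto
  finally show ?thesis .
qed

lemma Jc_antimono:
  assumes "0 \<le> d" "0 < h1" "h1 \<le> h2" "t > 0" "Tf > 0" "W > 0"
  shows "Jc Tf W t f n d h2 \<le> Jc Tf W t f n d h1"
proof (cases n)
  case 0 then show ?thesis by simp
next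
  case (Suc m)
  show ?thesis
  proof (cases m)
    case 0
    then show ?thesis using Suc assms energy_antimono[of d t W h1 h2] by (simp add: ennreal_leI)
  next
    case (Suc k)
    show ?thesis unfolding \<open>n = Suc m\<close> \<open>m = Suc k\<close> Jc.simps
    proof (rule INF_mono)
      fix w assume w: "w \<in> {0..d}"
      show "\<exists>v\<in>{0..d}. ennreal (energy v h2 Tf W) + (\<integral>\<^sup>+ g\<in>{0<..}. Jc Tf W t f (Suc k) (d - v) g * ennreal (f g) \<partial>lborel)
         \<le> ennreal (energy w h1 Tf W) + (\<integral>\<^sup>+ g\<in>{0<..}. Jc Tf W t f (Suc k) (d - w) g * ennreal (f g) \<partial>lborel)"
        using w assms energy_antimono[of w Tf W h1 h2]
        by (intro bexI[of _ w] add_mono ennreal_leI) auto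
    qed
  qed
qed

lemma antimono_measurable:
  fixes G :: "real \<Rightarrow> ennreal"
  assumes "\<And>x y. x \<le> y \<Longrightarrow> G y \<le> G x"
  shows "G \<in> borel_measurable borel"
proof (rule borel_measurableI_greater)
  fix a
  have "is_interval {x. a < G x}"
    unfolding is_interval_1
  proof (intro ballI allI impI, simp)
    fix p q x assume "a < G p" "a < G q" "p \<le> x \<and> x \<le> q"
    then show "a < G x" using assms[of x q] by (meson order_less_le_trans)
  qed
  then show "{x \<in> space borel. a < G x} \<in> sets borel"
    using real_interval_borel_measurable by simp
qed

lemma Jc_measurable:
  assumes "0 \<le> d" "t > 0" "Tf > 0" "W > 0" "f \<in> borel_measurable lborel"
  shows "(\<lambda>g. Jc Tf W t f n d g * ennreal (f g) * indicator {0<..} g) \<in> borel_measurable lborel"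
proof -
  define G where "G g = (if 0 < g then Jc Tf W t f n d g else top)" for g
  have "G \<in> borel_measurable borel"
  proof (rule antimono_measurable)
    fix x y :: real assume "x \<le> y"
    then show "G y \<le> G x" unfolding G_def using Jc_antimono[OF assms(1) _ _ assms(2-4)] by auto
  qed
  then have Gm: "G \<in> borel_measurable lborel" by simp
  have eq: "(\<lambda>g. Jc Tf W t f n d g * ennreal (f g) * indicator {0<..} g) = (\<lambda>g. G g * ennreal (f g) * indicator {0<..} g)"
    by (rule ext) (simp add: G_def indicator_def)
  show ?thesis unfolding eq using Gm assms(5) by measurable
qed

lemma Jexp_convex:
  assumes "0 \<le> De" "t > 0" "Tf > 0" "W > 0" "f \<in> borel_measurable lborel"
    and cv: "\<And>h. h > 0 \<Longrightarrow> convex_on_ennreal {0..De} (\<lambda>d. Jc Tf W t f n d h)"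
  shows "convex_on_ennreal {0..De} (Jexp Tf W t f n)"
  unfolding convex_on_ennreal_def
proof (intro conjI ballI allI impI)
  show "convex {0..De}" by simp
  fix x y u :: real assume x: "x \<in> {0..De}" and y: "y \<in> {0..De}" and u: "0 < u \<and> u < 1"
  define z where "z = u * x + (1 - u) * y"
  let ?J = "\<lambda>d g. Jc Tf W t f n d g * ennreal (f g) * indicator {0<..} g"
  have mx: "?J x \<in> borel_measurable lborel" using x assms by (intro Jc_measurable) auto
  have my: "?J y \<in> borel_measurable lborel" using y assms by (intro Jc_measurable) auto
  have "Jexp Tf W t f n z = (\<integral>\<^sup>+ g. ?J z g \<partial>lborel)" unfolding Jexp_def by simp
  also have "\<dots> \<le> (\<integral>\<^sup>+ g. ennreal u * ?J x g + ennreal (1 - u) * ?J y g \<partial>lborel)"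
  proof (rule nn_integral_mono)
    fix g
    show "?J z g \<le> ennreal u * ?J x g + ennreal (1 - u) * ?J y g"
    proof (cases "0 < g")
      case True
      have "Jc Tf W t f n z g \<le> ennreal u * Jc Tf W t f n x g + ennreal (1 - u) * Jc Tf W t f n y g"
        using cv[OF True] x y u unfolding convex_on_ennreal_def z_def by blast
      then have "Jc Tf W t f n z g * ennreal (f g) \<le> (ennreal u * Jc Tf W t f n x g + ennreal (1 - u) * Jc Tf W t f n y g) * ennreal (f g)"
        by (rule mult_right_mono) simp
      then show ?thesis using True by (simp add: distrib_right mult.assoc)
    qed simp
  qed
  also have "\<dots> = ennreal u * (\<integral>\<^sup>+ g. ?J x g \<partial>lborel) + ennreal (1 - u) * (\<integral>\<^sup>+ g. ?J y g \<partial>lborel)"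
    using mx my by (simp add: nn_integral_add nn_integral_cmult)
  also have "\<dots> = ennreal u * Jexp Tf W t f n x + ennreal (1 - u) * Jexp Tf W t f n y"
    unfolding Jexp_def by simp
  finally show "Jexp Tf W t f n (u * x + (1 - u) * y) \<le> ennreal u * Jexp Tf W t f n x + ennreal (1 - u) * Jexp Tf W t f n y"
    unfolding z_def .
qed

lemma Jc_SS_eq:
  "Jc Tf W t f (Suc (Suc n)) d h = (INF w\<in>{0..d}. ennreal (energy w h Tf W) + Jexp Tf W t f (Suc n) (d - w))"
  by (simp add: Jexp_def)

lemma Jc_step_convex:
  assumes "0 \<le> De" "Tf > 0" "W > 0" "h > 0"
    and cv: "convex_on_ennreal {0..De} (Jexp Tf W t f (Suc n))"
  shows "convex_on_ennreal {0..De} (\<lambda>d. Jc Tf W t f (Suc (Suc n)) d h)"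
  unfolding convex_on_ennreal_def Jc_SS_eq
proof (intro conjI ballI allI impI)
  show "convex {0..De}" by simp
  fix x y u :: real assume x: "x \<in> {0..De}" and y: "y \<in> {0..De}" and u: "0 < u \<and> u < 1"
  define z where "z = u * x + (1 - u) * y"
  let ?E = "\<lambda>w. ennreal (energy w h Tf W)"
  let ?B = "Jexp Tf W t f (Suc n)"
  let ?F = "\<lambda>d w. ?E w + ?B (d - w)"
  have key: "(INF w\<in>{0..z}. ?F z w) \<le> ennreal u * ?F x w1 + ennreal (1 - u) * ?F y w2"
    if w1: "w1 \<in> {0..x}" and w2: "w2 \<in> {0..y}" for w1 w2
  proof -
    define w where "w = u * w1 + (1 - u) * w2"
    have wz: "w \<in> {0..z}" using w1 w2 u unfolding w_def z_def
      by (auto intro!: add_mono mult_left_mono)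
    have "(INF w\<in>{0..z}. ?F z w) \<le> ?F z w" using wz by (rule INF_lower)
    also have "\<dots> \<le> (ennreal u * ?E w1 + ennreal (1 - u) * ?E w2)
        + (ennreal u * ?B (x - w1) + ennreal (1 - u) * ?B (y - w2))"
    proof (rule add_mono)
      show "?E w \<le> ennreal u * ?E w1 + ennreal (1 - u) * ?E w2"
        unfolding w_def using u w1 w2 assms by (intro energy_convex_ennreal) auto
      have "z - w = u * (x - w1) + (1 - u) * (y - w2)" unfolding z_def w_def by (simp add: algebra_simps)
      moreover have "x - w1 \<in> {0..De}" "y - w2 \<in> {0..De}" using x y w1 w2 by auto
      ultimately show "?B (z - w) \<le> ennreal u * ?B (x - w1) + ennreal (1 - u) * ?B (y - w2)"
        using cv u unfolding convex_on_ennreal_def by metis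
    qed
    also have "\<dots> = ennreal u * ?F x w1 + ennreal (1 - u) * ?F y w2"
      by (simp add: distrib_left algebra_simps)
    finally show ?thesis .
  qed
  show "(INF w\<in>{0..u * x + (1 - u) * y}. ?F (u * x + (1 - u) * y) w)
      \<le> ennreal u * (INF w\<in>{0..x}. ?F x w) + ennreal (1 - u) * (INF w\<in>{0..y}. ?F y w)"
    unfolding z_def[symmetric]
  proof (rule ennreal_le_epsilon)
    fix e :: real
    assume lt: "ennreal u * (INF w\<in>{0..x}. ?F x w) + ennreal (1 - u) * (INF w\<in>{0..y}. ?F y w) < top"
      and e: "0 < e"
    have ix: "(INF w\<in>{0..x}. ?F x w) \<noteq> top"
    proof
      assume "(INF w\<in>{0..x}. ?F x w) = top"
      then have "ennreal u * (INF w\<in>{0..x}. ?F x w) = top" using u by (simp add: ennreal_mult_top)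
      then show False using lt by simp
    qed
    have iy: "(INF w\<in>{0..y}. ?F y w) \<noteq> top"
    proof
      assume "(INF w\<in>{0..y}. ?F y w) = top"
      then have "ennreal (1 - u) * (INF w\<in>{0..y}. ?F y w) = top" using u by (simp add: ennreal_mult_top)
      then show False using lt by simp
    qed
    obtain w1 where w1: "w1 \<in> {0..x}" "?F x w1 < (INF w\<in>{0..x}. ?F x w) + e"
      using INF_approx_ennreal[OF e refl ix[unfolded infinity_ennreal_def[symmetric]]] by blast
    obtain w2 where w2: "w2 \<in> {0..y}" "?F y w2 < (INF w\<in>{0..y}. ?F y w) + e"
      using INF_approx_ennreal[OF e refl iy[unfolded infinity_ennreal_def[symmetric]]] by blast
    have "(INF w\<in>{0..z}. ?F z w) \<le> ennreal u * ?F x w1 + ennreal (1 - u) * ?F y w2"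
      using key[OF w1(1) w2(1)] .
    also have "\<dots> \<le> ennreal u * ((INF w\<in>{0..x}. ?F x w) + e) + ennreal (1 - u) * ((INF w\<in>{0..y}. ?F y w) + e)"
      using w1(2) w2(2) by (intro add_mono[OF mult_left_mono mult_left_mono]) (auto intro: less_imp_le)
    also have "\<dots> = ennreal u * (INF w\<in>{0..x}. ?F x w) + ennreal (1 - u) * (INF w\<in>{0..y}. ?F y w)
        + (ennreal u * ennreal e + ennreal (1 - u) * ennreal e)"
      by (simp add: distrib_left algebra_simps)
    also have "ennreal u * ennreal e + ennreal (1 - u) * ennreal e = ennreal e"
    proof -
      have "ennreal u * ennreal e + ennreal (1 - u) * ennreal e = ennreal (u * e + (1 - u) * e)"
        using u e by (simp add: ennreal_plus ennreal_mult)
      also have "u * e + (1 - u) * e = e" by (simp add: algebra_simps)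
      finally show ?thesis .
    qed
    finally show "(INF w\<in>{0..z}. ?F z w) \<le> ennreal u * (INF w\<in>{0..x}. ?F x w) + ennreal (1 - u) * (INF w\<in>{0..y}. ?F y w) + ennreal e" .
  qed
qed

lemma Jc_1_convex:
  assumes "t > 0" "W > 0" "h > 0"
  shows "convex_on_ennreal {0..De} (\<lambda>d. Jc Tf W t f (Suc 0) d h)"
  unfolding convex_on_ennreal_def using assms
  by (auto intro!: energy_convex_ennreal)

lemma Jc_all_convex:
  assumes "0 \<le> De" "t > 0" "Tf > 0" "W > 0" "f \<in> borel_measurable lborel"
  shows "\<forall>h>0. convex_on_ennreal {0..De} (\<lambda>d. Jc Tf W t f (Suc m) d h)"
proof (induction m)
  case 0
  then show ?case using Jc_1_convex assms by blast
next
  case (Suc m)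
  have "convex_on_ennreal {0..De} (Jexp Tf W t f (Suc m))"
    using Suc.IH assms by (intro Jexp_convex) auto
  then show ?case using Jc_step_convex assms by blast
qed

lemma t1_pos:
  assumes "Tf > 0" "T - c0 * De / fe > 0"
  shows "t1 T Tf fe c0 De > 0"
proof -
  define s where "s = T - c0 * De / fe"
  have "real_of_int \<lceil>s / Tf\<rceil> < s / Tf + 1" by linarith
  then have "real_of_int \<lceil>s / Tf\<rceil> * Tf < (s / Tf + 1) * Tf" using assms by (simp add: mult_strict_right_mono)
  also have "\<dots> = s + Tf" using assms by (simp add: field_simps)
  finally show ?thesis unfolding t1_def s_def[symmetric] by simp
qed

theorem lemma1:
  fixes T Tf fe c0 W De :: real and f :: "real \<Rightarrow> real"
  assumes "T > 0" "Tf > 0" "fe > 0" "c0 > 0" "W > 0"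
    and f_meas: "f \<in> borel_measurable lborel"
    and f_nonneg: "\<And>h. h > 0 \<Longrightarrow> f h \<ge> 0"
    and f_prob: "(\<integral>\<^sup>+ h\<in>{0<..}. ennreal (f h) \<partial>lborel) = 1"
    and "De \<ge> 0" and "T - c0 * De / fe > 0"
    and n: "1 \<le> n" "int n \<le> Nblocks T Tf fe c0 De - 1"
  shows "convex_on_ennreal {0..De} (Jexp Tf W (t1 T Tf fe c0 De) f n)
       \<and> (\<forall>h>0. convex_on_ennreal {0..De} (\<lambda>d. Jc Tf W (t1 T Tf fe c0 De) f n d h))"
proof -
  obtain m where m: "n = Suc m" using n(1) by (cases n) auto
  have tp: "t1 T Tf fe c0 De > 0" using t1_pos assms by blast
  have A: "\<forall>h>0. convex_on_ennreal {0..De} (\<lambda>d. Jc Tf W (t1 T Tf fe c0 De) f n d h)"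
    unfolding m using Jc_all_convex[OF _ tp] assms by blast
  have B: "convex_on_ennreal {0..De} (Jexp Tf W (t1 T Tf fe c0 De) f n)"
    using A assms tp by (intro Jexp_convex) auto
  show ?thesis using A B by blast
qed

end
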